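(* Let $I$ be a dyadic interval with left half $I_l$ and right half $I_r$, and let $\Psi(x_1,\ldots,x_m)$ be a bounded measurable function. Then $$\sum_{\substack{S\subseteq\{1,\ldots,m\}\\|S|\ \text{even}}}\Big[\big\langle\Psi(x_1,\ldots,x_m)\big\rangle_{x_i\in I\ (i\in S)}\Big]_{x_i\in I\ (i\notin S)}=\frac12\big[\Psi(x_1,\ldots,x_m)\big]_{x_1,\ldots,x_m\in I_l}+\frac12\big[\Psi(x_1,\ldots,x_m)\big]_{x_1,\ldots,x_m\in I_r}.$$ In particular, if $\Psi\geq 0$, then the left-hand sum is nonnegative.
   Context: For a dyadic interval $I$ and integrable $f$, $[f(x)]_{x\in I}:=\frac{1}{|I|}\int_I f$ and $\langle f(x)\rangle_{x\in I}:=\frac{1}{|I|}\big(\int_{I_l}f-\int_{I_r}f\big)$; brackets with several subscripted variables denote iterated averages in each variable (for $[\cdot]_{x\in I_l}$ the average is over $I_l$). The sum includes $S=\emptyset$. *)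

theory Defs
  imports "HOL-Analysis.Analysis"
begin

definition dyadic :: "int \<Rightarrow> int \<Rightarrow> real set" where
  "dyadic j k = {real_of_int k * 2 powr (- real_of_int j) ..< (real_of_int k + 1) * 2 powr (- real_of_int j)}"

definition left_half :: "int \<Rightarrow> int \<Rightarrow> real set" where
  "left_half j k = dyadic (j + 1) (2 * k)"

definition right_half :: "int \<Rightarrow> int \<Rightarrow> real set" where
  "right_half j k = dyadic (j + 1) (2 * k + 1)"

text \<open>Functions of the variables x_1,...,x_m are modelled as functions of
  x :: nat \<Rightarrow> real.  Averaging in the variable x_i over a set J:
  [F]_{x_i \<in> J}.\<close>
definition avg_var :: "real set \<Rightarrow> nat \<Rightarrow> ((nat \<Rightarrow> real) \<Rightarrow> real) \<Rightarrow> (nat \<Rightarrow> real) \<Rightarrow> real" where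
  "avg_var J i F = (\<lambda>x. (1 / measure lborel J) * (LINT t:J|lborel. F (x(i := t))))"

definition haar_var :: "int \<Rightarrow> int \<Rightarrow> nat \<Rightarrow> ((nat \<Rightarrow> real) \<Rightarrow> real) \<Rightarrow> (nat \<Rightarrow> real) \<Rightarrow> real" where
  "haar_var j k i F = (\<lambda>x. (1 / measure lborel (dyadic j k)) *
      ((LINT t:left_half j k|lborel. F (x(i := t))) - (LINT t:right_half j k|lborel. F (x(i := t)))))"

definition avg_vars :: "real set \<Rightarrow> nat set \<Rightarrow> ((nat \<Rightarrow> real) \<Rightarrow> real) \<Rightarrow> (nat \<Rightarrow> real) \<Rightarrow> real" where
  "avg_vars J S F = foldr (avg_var J) (sorted_list_of_set S) F"

definition haar_vars :: "int \<Rightarrow> int \<Rightarrow> nat set \<Rightarrow> ((nat \<Rightarrow> real) \<Rightarrow> real) \<Rightarrow> (nat \<Rightarrow> real) \<Rightarrow> real" where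
  "haar_vars j k S F = foldr (haar_var j k) (sorted_list_of_set S) F"

end

theory Submission
  imports Defs
begin

interpretation PL: product_sigma_finite "\<lambda>_::nat. lborel :: real measure"
  by (simp add: product_sigma_finite_def lborel.sigma_finite_measure_axioms)

definition opw :: "(real \<Rightarrow> real) \<Rightarrow> nat \<Rightarrow> ((nat \<Rightarrow> real) \<Rightarrow> real) \<Rightarrow> (nat \<Rightarrow> real) \<Rightarrow> real" where
  "opw w i F = (\<lambda>x. \<integral>t. w t * F (x(i := t)) \<partial>lborel)"

definition mrg :: "nat set \<Rightarrow> (nat \<Rightarrow> real) \<Rightarrow> (nat \<Rightarrow> real) \<Rightarrow> (nat \<Rightarrow> real)" where
  "mrg S z x = (\<lambda>n. if n \<in> S then z n else x n)"

abbreviation PP :: "nat set \<Rightarrow> (nat \<Rightarrow> real) measure" where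
  "PP S \<equiv> PiM S (\<lambda>_::nat. lborel :: real measure)"

lemma mrg_in: "S \<subseteq> {1..m} \<Longrightarrow> x \<in> space (PP {1..m}) \<Longrightarrow> mrg S z x \<in> space (PP {1..m})"
  by (auto simp: space_PiM PiE_def extensional_def mrg_def)

lemma upd_in: "i \<in> {1..m} \<Longrightarrow> x \<in> space (PP {1..m}) \<Longrightarrow> x(i:=t) \<in> space (PP {1..m})"
  by (auto simp: space_PiM PiE_def extensional_def)

lemma mrg_meas: assumes "S \<subseteq> {1..m}" "x \<in> space (PP {1..m})"
  shows "(\<lambda>z. mrg S z x) \<in> measurable (PP S) (PP {1..m})"
  unfolding mrg_def
proof (rule measurable_PiM_single')
  fix i assume "i \<in> {1..m}"
  show "(\<lambda>z. if i \<in> S then z i else x i) \<in> measurable (PP S) lborel"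
    by (cases "i \<in> S") (simp_all add: measurable_component_singleton)
next
  show "(\<lambda>z i. if i \<in> S then z i else x i) \<in> space (PP S) \<rightarrow> (\<Pi>\<^sub>E i\<in>{1..m}. space lborel)"
  proof
    fix z
    have xe: "\<And>i. i \<notin> {1..m} \<Longrightarrow> x i = undefined"
      using assms(2) by (simp add: space_PiM PiE_def extensional_def)
    have "\<And>i. i \<notin> {1..m} \<Longrightarrow> (if i \<in> S then z i else x i) = undefined"
      using xe assms(1) by auto
    then show "(\<lambda>i. if i \<in> S then z i else x i) \<in> (\<Pi>\<^sub>E i\<in>{1..m}. space lborel)"
      by (simp add: PiE_def extensional_def)
  qed
qed

lemma mrg_meas2: assumes "S \<subseteq> {1..m}" "x \<in> space (PP {1..m})" "a \<in> {1..m}" "a \<notin> S"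
  shows "(\<lambda>(t,y). mrg S y (x(a:=t))) \<in> measurable (lborel \<Otimes>\<^sub>M PP S) (PP {1..m})"
proof -
  have "(\<lambda>(t,y). mrg S y (x(a:=t))) = (\<lambda>p i. if i \<in> S then snd p i else if i = a then fst p else x i)"
    by (simp add: mrg_def fun_eq_iff split_beta)
  moreover have "(\<lambda>p i. if i \<in> S then snd p i else if i = a then fst p else x i) \<in> measurable (lborel \<Otimes>\<^sub>M PP S) (PP {1..m})"
  proof (rule measurable_PiM_single')
    fix i assume "i \<in> {1..m}"
    show "(\<lambda>p. if i \<in> S then snd p i else if i = a then fst p else x i) \<in> measurable (lborel \<Otimes>\<^sub>M PP S) lborel"
      by (cases "i \<in> S"; cases "i = a")
        (simp_all add: measurable_compose[OF measurable_snd measurable_component_singleton])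
  next
    show "(\<lambda>p i. if i \<in> S then snd p i else if i = a then fst p else x i) \<in> space (lborel \<Otimes>\<^sub>M PP S) \<rightarrow> (\<Pi>\<^sub>E i\<in>{1..m}. space lborel)"
    proof
      fix p
      have xe: "\<And>i. i \<notin> {1..m} \<Longrightarrow> x i = undefined"
        using assms(2) by (simp add: space_PiM PiE_def extensional_def)
      have "\<And>i. i \<notin> {1..m} \<Longrightarrow> (if i \<in> S then snd p i else if i = a then fst p else x i) = undefined"
        using xe assms(1,3) by auto
      then show "(\<lambda>i. if i \<in> S then snd p i else if i = a then fst p else x i) \<in> (\<Pi>\<^sub>E i\<in>{1..m}. space lborel)"
        by (simp add: PiE_def extensional_def)
    qed
  qed
  ultimately show ?thesis by simp
qed


locale rep =
  fixes m :: nat and \<Psi> :: "(nat \<Rightarrow> real) \<Rightarrow> real" and B :: real and W :: "nat \<Rightarrow> real \<Rightarrow> real"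
  assumes Psi_meas: "\<Psi> \<in> borel_measurable (PP {1..m})"
    and Psi_bd: "\<forall>x\<in>space (PP {1..m}). \<bar>\<Psi> x\<bar> \<le> B"
    and W_int: "\<And>i. integrable lborel (W i)"
begin

definition f where "f S x z = (\<Prod>i\<in>S. W i (z i)) * \<Psi> (mrg S z x)"

lemma W_meas[measurable]: "W i \<in> borel_measurable lborel"
  using W_int by auto

lemma f_meas: assumes "S \<subseteq> {1..m}" "x \<in> space (PP {1..m})"
  shows "f S x \<in> borel_measurable (PP S)"
proof -
  have "(\<lambda>z. \<Psi> (mrg S z x)) \<in> borel_measurable (PP S)"
    using measurable_compose[OF mrg_meas[OF assms] Psi_meas] .
  then show ?thesis unfolding f_def[abs_def] by measurable
qed

lemma f_int: assumes "S \<subseteq> {1..m}" "x \<in> space (PP {1..m})"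
  shows "integrable (PP S) (f S x)"
proof -
  have fin: "finite S" using assms(1) finite_subset by blast
  have maj: "integrable (PP S) (\<lambda>z. B * (\<Prod>i\<in>S. \<bar>W i (z i)\<bar>))"
    by (intro integrable_mult_right PL.product_integrable_prod fin integrable_abs W_int)
  show ?thesis
  proof (rule Bochner_Integration.integrable_bound[OF maj])
  show "f S x \<in> borel_measurable (PP S)" by (rule f_meas[OF assms])
  show "AE z in PP S. norm (f S x z) \<le> norm (B * (\<Prod>i\<in>S. \<bar>W i (z i)\<bar>))"
  proof (rule AE_I2)
    fix z assume "z \<in> space (PP S)"
    have b: "\<bar>\<Psi> (mrg S z x)\<bar> \<le> B" using Psi_bd mrg_in[OF assms] by blast
    have "norm (f S x z) = \<bar>\<Prod>i\<in>S. W i (z i)\<bar> * \<bar>\<Psi> (mrg S z x)\<bar>"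
      by (simp add: f_def abs_mult)
    also have "\<dots> \<le> \<bar>\<Prod>i\<in>S. W i (z i)\<bar> * B" by (intro mult_left_mono b) simp
    also have "\<dots> \<le> \<bar>\<Prod>i\<in>S. W i (z i)\<bar> * \<bar>B\<bar>" by (intro mult_left_mono) auto
    also have "\<dots> = norm (B * (\<Prod>i\<in>S. \<bar>W i (z i)\<bar>))"
      by (simp add: abs_mult abs_prod)
    finally show "norm (f S x z) \<le> norm (B * (\<Prod>i\<in>S. \<bar>W i (z i)\<bar>))" .
  qed
  qed
qed

lemma Rint_meas: assumes "R \<subseteq> {1..m}" "x \<in> space (PP {1..m})" "a \<in> {1..m}" "a \<notin> R"
  shows "(\<lambda>t. \<integral>y. f R (x(a:=t)) y \<partial>PP R) \<in> borel_measurable lborel"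
proof -
  have fin: "finite R" using assms(1) finite_subset by blast
  interpret PR: finite_product_sigma_finite "\<lambda>_::nat. lborel :: real measure" R
    by standard (rule fin)
  have 1: "(\<lambda>p. \<Psi> ((\<lambda>(t,y). mrg R y (x(a:=t))) p)) \<in> borel_measurable (lborel \<Otimes>\<^sub>M PP R)"
    using measurable_compose[OF mrg_meas2[OF assms] Psi_meas] .
  have "case_prod (\<lambda>t y. f R (x(a:=t)) y) \<in> borel_measurable (lborel \<Otimes>\<^sub>M PP R)"
  proof -
    have "case_prod (\<lambda>t y. f R (x(a:=t)) y) = (\<lambda>p. (\<Prod>i\<in>R. W i (snd p i)) * \<Psi> ((\<lambda>(t,y). mrg R y (x(a:=t))) p))"
      by (auto simp: f_def fun_eq_iff)
    also have "\<dots> \<in> borel_measurable (lborel \<Otimes>\<^sub>M PP R)"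
      using 1 by measurable
    finally show ?thesis .
  qed
  then show ?thesis by (rule PR.borel_measurable_lebesgue_integral)
qed

lemma f_merge: assumes "a \<notin> R" "finite R"
  shows "f (insert a R) x (merge {a} R (u,y)) = W a (u a) * f R (x(a:=u a)) y"
proof -
  have fin: "finite R \<or> \<not> finite R" by simp
  have p: "(\<Prod>i\<in>R. W i (if i = a then u i else if i \<in> R then y i else undefined)) = (\<Prod>i\<in>R. W i (y i))"
    using assms by (intro prod.cong) auto
  have m: "mrg (insert a R) (merge {a} R (u,y)) x = mrg R y (x(a:=u a))"
    using assms by (auto simp: mrg_def merge_def fun_eq_iff)
  show ?thesis
    using assms unfolding f_def m by (simp add: p merge_def)
qed

lemma rep: "distinct is \<Longrightarrow> set is \<subseteq> {1..m} \<Longrightarrow> x \<in> space (PP {1..m}) \<Longrightarrow>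
  foldr (\<lambda>i. opw (W i) i) is \<Psi> x = (\<integral>z. f (set is) x z \<partial>PP (set is))"
proof (induction "is" arbitrary: x)
  case Nil
  show ?case by (simp add: PiM_empty f_def mrg_def lebesgue_integral_count_space_finite)
next
  case (Cons a rest)
  let ?R = "set rest"
  have aR: "a \<notin> ?R" "distinct rest" "?R \<subseteq> {1..m}" "a \<in> {1..m}" using Cons.prems by auto
  have IH: "\<And>t. foldr (\<lambda>i. opw (W i) i) rest \<Psi> (x(a:=t)) = (\<integral>y. f ?R (x(a:=t)) y \<partial>PP ?R)"
    using Cons.IH aR upd_in Cons.prems(3) by blast
  have meas: "(\<lambda>t. W a t * (\<integral>y. f ?R (x(a:=t)) y \<partial>PP ?R)) \<in> borel_measurable lborel"
    using Rint_meas[OF aR(3) Cons.prems(3) aR(4) aR(1)] by measurable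
  have "foldr (\<lambda>i. opw (W i) i) (a#rest) \<Psi> x = (\<integral>t. W a t * (\<integral>y. f ?R (x(a:=t)) y \<partial>PP ?R) \<partial>lborel)"
    by (simp add: opw_def IH)
  also have "\<dots> = (\<integral>u. W a (u a) * (\<integral>y. f ?R (x(a:=u a)) y \<partial>PP ?R) \<partial>PP {a})"
    using PL.product_integral_singleton[OF meas[folded], of a] by simp
  also have "\<dots> = (\<integral>u. (\<integral>y. f (insert a ?R) x (merge {a} ?R (u,y)) \<partial>PP ?R) \<partial>PP {a})"
    by (simp add: f_merge[OF aR(1) finite_set])
  also have "\<dots> = (\<integral>z. f (insert a ?R) x z \<partial>PP (insert a ?R))"
    using PL.product_integral_fold[of "{a}" ?R "f (insert a ?R) x"] f_int[of "insert a ?R" x] aR Cons.prems(3)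
    by simp
  finally show ?case by simp
qed

lemma Rint_bd: assumes "R \<subseteq> {1..m}" "x \<in> space (PP {1..m})"
  shows "\<bar>\<integral>y. f R x y \<partial>PP R\<bar> \<le> (\<integral>z. B * (\<Prod>i\<in>R. \<bar>W i (z i)\<bar>) \<partial>PP R)"
proof -
  have fin: "finite R" using assms(1) finite_subset by blast
  have maj: "integrable (PP R) (\<lambda>z. B * (\<Prod>i\<in>R. \<bar>W i (z i)\<bar>))"
    by (intro integrable_mult_right PL.product_integrable_prod fin integrable_abs W_int)
  have "\<bar>\<integral>y. f R x y \<partial>PP R\<bar> \<le> (\<integral>y. \<bar>f R x y\<bar> \<partial>PP R)"
    using integral_norm_bound[of "PP R" "f R x"] by simp
  also have "\<dots> \<le> (\<integral>z. B * (\<Prod>i\<in>R. \<bar>W i (z i)\<bar>) \<partial>PP R)"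
  proof (rule integral_mono[OF integrable_abs[OF f_int[OF assms]] maj])
    fix z assume "z \<in> space (PP R)"
    have b: "\<bar>\<Psi> (mrg R z x)\<bar> \<le> B" using Psi_bd mrg_in[OF assms] by blast
    have "\<bar>f R x z\<bar> = \<bar>\<Prod>i\<in>R. W i (z i)\<bar> * \<bar>\<Psi> (mrg R z x)\<bar>"
      by (simp add: f_def abs_mult)
    also have "\<dots> \<le> \<bar>\<Prod>i\<in>R. W i (z i)\<bar> * B" by (intro mult_left_mono b) simp
    also have "\<dots> = B * (\<Prod>i\<in>R. \<bar>W i (z i)\<bar>)"
      by (simp add: abs_prod)
    finally show "\<bar>f R x z\<bar> \<le> B * (\<Prod>i\<in>R. \<bar>W i (z i)\<bar>)" .
  qed
  finally show ?thesis .
qed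

end

lemma bdd_set_int:
  assumes g: "g \<in> borel_measurable lborel" and K: "\<And>t. \<bar>g t\<bar> \<le> K"
    and A: "A \<in> sets lborel" "emeasure lborel A < \<infinity>"
  shows "set_integrable lborel A (g :: real \<Rightarrow> real)"
  unfolding set_integrable_def
proof (rule Bochner_Integration.integrable_bound)
  show "integrable lborel (\<lambda>t. K * indicator A t :: real)"
    by (intro integrable_mult_right integrable_real_indicator A)
  show "(\<lambda>t. indicator A t *\<^sub>R g t) \<in> borel_measurable lborel"
    using g A by measurable
  show "AE t in lborel. norm (indicator A t *\<^sub>R g t) \<le> norm (K * indicator A t :: real)"
  proof (rule AE_I2)
    fix t
    have "0 \<le> K" using K[of t] by linarith
    then show "norm (indicator A t *\<^sub>R g t) \<le> norm (K * indicator A t :: real)"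
      using K[of t] by (auto simp: indicator_def)
  qed
qed

lemma avg_opw: "avg_var J i F = opw (\<lambda>t. indicator J t / measure lborel J) i F"
  unfolding avg_var_def opw_def set_lebesgue_integral_def
  by (simp add: fun_eq_iff)

definition wH :: "int \<Rightarrow> int \<Rightarrow> real \<Rightarrow> real" where
  "wH j k t = (indicator (left_half j k) t - indicator (right_half j k) t) / measure lborel (dyadic j k)"

lemma haar_opw:
  assumes "set_integrable lborel (left_half j k) (\<lambda>t. G (x(a:=t)))"
    and "set_integrable lborel (right_half j k) (\<lambda>t. G (x(a:=t)))"
  shows "haar_var j k a G x = opw (wH j k) a G x"
proof -
  have "haar_var j k a G x = (1 / measure lborel (dyadic j k)) *
     (\<integral>t. indicator (left_half j k) t * G (x(a:=t)) - indicator (right_half j k) t * G (x(a:=t)) \<partial>lborel)"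
    using assms unfolding haar_var_def set_lebesgue_integral_def set_integrable_def
    by (subst Bochner_Integration.integral_diff) auto
  also have "\<dots> = opw (wH j k) a G x"
    unfolding opw_def wH_def by (simp add: left_diff_distrib)
  finally show ?thesis .
qed

lemma dyadic_sets: "dyadic j k \<in> sets lborel" "emeasure lborel (dyadic j k) < \<infinity>"
  unfolding dyadic_def by (auto simp: algebra_simps)

lemma halves_sets: "left_half j k \<in> sets lborel" "emeasure lborel (left_half j k) < \<infinity>"
   "right_half j k \<in> sets lborel" "emeasure lborel (right_half j k) < \<infinity>"
  unfolding left_half_def right_half_def by (rule dyadic_sets)+

lemma opw_cong: "(\<And>t. F (x(i:=t)) = G (x(i:=t))) \<Longrightarrow> opw w i F x = opw w i G x"
  by (simp add: opw_def)

lemma foldr_opw_cong: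
  assumes "set is \<subseteq> {1..m}" "\<And>y. y \<in> space (PP {1..m}) \<Longrightarrow> F y = G y" "x \<in> space (PP {1..m})"
  shows "foldr (\<lambda>i. opw (W i) i) is F x = foldr (\<lambda>i. opw (W i) i) is G x"
  using assms(1,3)
proof (induction "is" arbitrary: x)
  case Nil
  then show ?case using assms(2) by simp
next
  case (Cons a rest)
  have "\<And>t. foldr (\<lambda>i. opw (W i) i) rest F (x(a:=t)) = foldr (\<lambda>i. opw (W i) i) rest G (x(a:=t))"
    using Cons upd_in[of a m x] by auto
  then show ?case using opw_cong[of "foldr (\<lambda>i. opw (W i) i) rest F" x a] by simp
qed

context rep begin

lemma haar_conv:
  "distinct is \<Longrightarrow> set is \<subseteq> {1..m} \<Longrightarrow> (\<forall>i\<in>set is. W i = wH j k) \<Longrightarrow> x \<in> space (PP {1..m}) \<Longrightarrow>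
   foldr (haar_var j k) is \<Psi> x = foldr (\<lambda>i. opw (W i) i) is \<Psi> x"
proof (induction "is" arbitrary: x)
  case Nil
  then show ?case by simp
next
  case (Cons a rest)
  let ?R = "set rest"
  let ?G = "foldr (\<lambda>i. opw (W i) i) rest \<Psi>"
  have aR: "a \<notin> ?R" "distinct rest" "?R \<subseteq> {1..m}" "a \<in> {1..m}" using Cons.prems by auto
  have IH: "\<And>t. foldr (haar_var j k) rest \<Psi> (x(a:=t)) = ?G (x(a:=t))"
    using Cons.IH aR upd_in Cons.prems(3,4) by auto
  have rp: "\<And>t. ?G (x(a:=t)) = (\<integral>y. f ?R (x(a:=t)) y \<partial>PP ?R)"
    by (rule rep[OF aR(2) aR(3) upd_in[OF aR(4) Cons.prems(4)]])
  have gm: "(\<lambda>t. ?G (x(a:=t))) \<in> borel_measurable lborel"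
    unfolding rp using Rint_meas[OF aR(3) Cons.prems(4) aR(4) aR(1)] .
  have gb: "\<And>t. \<bar>?G (x(a:=t))\<bar> \<le> (\<integral>z. B * (\<Prod>i\<in>?R. \<bar>W i (z i)\<bar>) \<partial>PP ?R)"
    unfolding rp using Rint_bd[OF aR(3) upd_in[OF aR(4) Cons.prems(4)]] .
  have "foldr (haar_var j k) (a#rest) \<Psi> x = haar_var j k a ?G x"
    by (simp add: haar_var_def IH)
  also have "\<dots> = opw (wH j k) a ?G x"
    by (intro haar_opw bdd_set_int[OF gm gb] halves_sets)
  also have "\<dots> = foldr (\<lambda>i. opw (W i) i) (a#rest) \<Psi> x"
    using Cons.prems(3) by simp
  finally show ?case .
qed

end



lemma dy_c: "(2::real) powr (- real_of_int (j+1)) = 2 powr (- real_of_int j) / 2"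
proof -
  have "- real_of_int (j+1) = - real_of_int j - 1" by simp
  then show ?thesis by (simp add: powr_diff)
qed

lemma left_eq: "left_half j k = {real_of_int k * 2 powr (- real_of_int j) ..< (real_of_int k + 1/2) * 2 powr (- real_of_int j)}"
proof -
  let ?c = "(2::real) powr (- real_of_int j)"
  have e1: "real_of_int (2*k) * (?c/2) = real_of_int k * ?c" by simp
  have e2: "(real_of_int (2*k) + 1) * (?c/2) = (real_of_int k + 1/2) * ?c" by (simp add: field_simps)
  show ?thesis unfolding left_half_def dyadic_def dy_c e1 e2 ..
qed

lemma right_eq: "right_half j k = {(real_of_int k + 1/2) * 2 powr (- real_of_int j) ..< (real_of_int k + 1) * 2 powr (- real_of_int j)}"
proof -
  let ?c = "(2::real) powr (- real_of_int j)"
  have e1: "real_of_int (2*k+1) * (?c/2) = (real_of_int k + 1/2) * ?c" by (simp add: field_simps)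
  have e2: "(real_of_int (2*k+1) + 1) * (?c/2) = (real_of_int k + 1) * ?c" by (simp add: field_simps)
  show ?thesis unfolding right_half_def dyadic_def dy_c e1 e2 ..
qed

lemma Ico_split: "(l::real) \<le> m \<Longrightarrow> m \<le> u \<Longrightarrow> indicator {l..<u} t = indicator {l..<m} t + (indicator {m..<u} t::real)"
  by (auto simp: indicator_def)

lemma ind_split: "indicator (dyadic j k) t = (indicator (left_half j k) t + indicator (right_half j k) t :: real)"
proof -
  let ?c = "(2::real) powr (- real_of_int j)"
  have c: "?c > 0" by simp
  have "real_of_int k * ?c \<le> (real_of_int k + 1/2) * ?c" "(real_of_int k + 1/2) * ?c \<le> (real_of_int k + 1) * ?c"
    using c by (simp_all add: mult_right_mono)
  then show ?thesis unfolding left_eq right_eq dyadic_def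
    by (intro Ico_split)
qed

lemma meas_dy: "measure lborel (dyadic j k) = 2 powr (- real_of_int j)"
  unfolding dyadic_def by (simp add: algebra_simps)

lemma meas_left: "measure lborel (left_half j k) = 2 powr (- real_of_int j) / 2"
  unfolding left_eq by (simp add: algebra_simps)

lemma meas_right: "measure lborel (right_half j k) = 2 powr (- real_of_int j) / 2"
  unfolding right_eq by (simp add: algebra_simps)

lemma even_sum:
  fixes a h :: "nat \<Rightarrow> real"
  assumes U: "finite U"
  shows "(\<Sum>S | S \<subseteq> U \<and> even (card S). \<Prod>i\<in>U. if i \<in> S then h i else a i)
     = ((\<Prod>i\<in>U. a i + h i) + (\<Prod>i\<in>U. a i - h i)) / 2"
proof -
  define T where "T X = (\<Prod>i\<in>X. h i) * (\<Prod>i\<in>U - X. a i)" for X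
  have pT: "(\<Prod>i\<in>U. if i \<in> X then h i else a i) = T X" if "X \<subseteq> U" for X
  proof -
    have "(\<Prod>i\<in>U. if i \<in> X then h i else a i) = (\<Prod>i\<in>U \<inter> {i. i \<in> X}. h i) * (\<Prod>i\<in>U \<inter> - {i. i \<in> X}. a i)"
      by (rule prod.If_cases[OF U])
    also have "U \<inter> {i. i \<in> X} = X" using that by auto
    also have "U \<inter> - {i. i \<in> X} = U - X" by auto
    finally show ?thesis by (simp add: T_def)
  qed
  have p1: "(\<Prod>i\<in>U. a i + h i) = (\<Sum>X\<in>Pow U. T X)"
    using prod_add[OF U, of h a] by (simp add: T_def add.commute)
  have p2: "(\<Prod>i\<in>U. a i - h i) = (\<Sum>X\<in>Pow U. (-1) ^ card X * T X)"
  proof -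
    have "(\<Prod>i\<in>U. a i - h i) = (\<Prod>i\<in>U. (- h i) + a i)" by simp
    also have "\<dots> = (\<Sum>X\<in>Pow U. (\<Prod>i\<in>X. - h i) * (\<Prod>i\<in>U - X. a i))"
      by (rule prod_add[OF U])
    also have "\<dots> = (\<Sum>X\<in>Pow U. (-1) ^ card X * T X)"
    proof (rule sum.cong[OF refl])
      fix X assume "X \<in> Pow U"
      then have "finite X" using U finite_subset by auto
      have "(\<Prod>i\<in>X. - h i) = (-1) ^ card X * (\<Prod>i\<in>X. h i)"
        using \<open>finite X\<close> by (induction X rule: finite_induct) auto
      then show "(\<Prod>i\<in>X. - h i) * (\<Prod>i\<in>U - X. a i) = (-1) ^ card X * T X"
        by (simp add: T_def)
    qed
    finally show ?thesis .
  qed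
  have "(\<Sum>S | S \<subseteq> U \<and> even (card S). \<Prod>i\<in>U. if i \<in> S then h i else a i)
      = (\<Sum>S | S \<in> Pow U \<and> even (card S). T S)"
    by (rule sum.cong) (auto simp: pT)
  also have "\<dots> = (\<Sum>X\<in>Pow U. if even (card X) then T X else 0)"
    using sum.inter_filter[of "Pow U" T "\<lambda>X. even (card X)"] U by simp
  also have "\<dots> = (\<Sum>X\<in>Pow U. (T X + (-1) ^ card X * T X) / 2)"
    by (rule sum.cong[OF refl]) auto
  also have "\<dots> = ((\<Sum>X\<in>Pow U. T X) + (\<Sum>X\<in>Pow U. (-1) ^ card X * T X)) / 2"
    by (simp only: sum.distrib[symmetric] sum_divide_distrib)
  finally show ?thesis using p1 p2 by simp
qed



theorem lemma1:
  fixes m :: nat and j k :: int and \<Psi> :: "(nat \<Rightarrow> real) \<Rightarrow> real"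
  assumes meas: "\<Psi> \<in> borel_measurable (PiM {1..m} (\<lambda>_. lborel))"
    and bdd: "\<exists>B. \<forall>x \<in> space (PiM {1..m} (\<lambda>_. lborel)). \<bar>\<Psi> x\<bar> \<le> B"
  shows "(\<Sum>S | S \<subseteq> {1..m} \<and> even (card S).
            avg_vars (dyadic j k) ({1..m} - S) (haar_vars j k S \<Psi>) (\<lambda>_. undefined))
         = 1/2 * avg_vars (left_half j k) {1..m} \<Psi> (\<lambda>_. undefined)
           + 1/2 * avg_vars (right_half j k) {1..m} \<Psi> (\<lambda>_. undefined)
       \<and> ((\<forall>x \<in> space (PiM {1..m} (\<lambda>_. lborel)). \<Psi> x \<ge> 0) \<longrightarrow>
            (\<Sum>S | S \<subseteq> {1..m} \<and> even (card S).
              avg_vars (dyadic j k) ({1..m} - S) (haar_vars j k S \<Psi>) (\<lambda>_. undefined)) \<ge> 0)"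
proof -
  obtain B where B: "\<forall>x\<in>space (PP {1..m}). \<bar>\<Psi> x\<bar> \<le> B" using bdd by blast
  define c where "c = (2::real) powr (- real_of_int j)"
  have c: "c > 0" unfolding c_def by simp
  define wA where "wA t = indicator (dyadic j k) t / measure lborel (dyadic j k)" for t
  define wL where "wL t = indicator (left_half j k) t / measure lborel (left_half j k)" for t
  define wR where "wR t = indicator (right_half j k) t / measure lborel (right_half j k)" for t
  have intA: "integrable lborel wA" unfolding wA_def
    by (intro integrable_divide_zero integrable_real_indicator dyadic_sets)
  have intL: "integrable lborel wL" unfolding wL_def
    by (intro integrable_divide_zero integrable_real_indicator halves_sets)
  have intR: "integrable lborel wR" unfolding wR_def
    by (intro integrable_divide_zero integrable_real_indicator halves_sets)
  have intH: "integrable lborel (wH j k)" unfolding wH_def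
    by (intro integrable_divide_zero Bochner_Integration.integrable_diff integrable_real_indicator halves_sets)
  have AHL: "wA t + wH j k t = wL t" for t
    unfolding wA_def wH_def wL_def ind_split meas_dy meas_left c_def[symmetric]
    using c by (simp add: field_simps)
  have AHR: "wA t - wH j k t = wR t" for t
    unfolding wA_def wH_def wR_def ind_split meas_dy meas_right c_def[symmetric]
    using c by (simp add: field_simps)
  have loc: "\<And>W. (\<And>i. integrable lborel (W i)) \<Longrightarrow> rep m \<Psi> B W"
    using meas B by (simp add: rep_def)
  define x0 where "x0 = (\<lambda>_::nat. undefined :: real)"
  have x0: "x0 \<in> space (PP {1..m})" by (simp add: x0_def space_PiM PiE_def extensional_def)
  define WS where "WS S i = (if i \<in> S then wH j k else wA)" for S and i :: nat
  define G where "G W z = (\<Prod>i\<in>{1..m}. W i (z i)) * \<Psi> (mrg {1..m} z x0)" for W and z :: "nat \<Rightarrow> real"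
  have Gint: "integrable (PP {1..m}) (G W)" if "\<And>i. integrable lborel (W i)" for W
  proof -
    have r: "rep m \<Psi> B W" using loc that by blast
    have e: "rep.f \<Psi> W {1..m} x0 = G W" by (simp add: fun_eq_iff rep.f_def[OF r] G_def)
    show ?thesis using rep.f_int[OF r, of "{1..m}" x0, unfolded e] x0 by simp
  qed
  have Grep: "foldr (\<lambda>i. opw (W i) i) is \<Psi> x0 = (\<integral>z. G W z \<partial>PP {1..m})"
    if "\<And>i. integrable lborel (W i)" "distinct is" "set is = {1..m}" for W "is"
  proof -
    have r: "rep m \<Psi> B W" using loc that(1) by blast
    have e: "rep.f \<Psi> W {1..m} x0 = G W" by (simp add: fun_eq_iff rep.f_def[OF r] G_def)
    show ?thesis using rep.rep[OF r that(2) _ x0] that(3) by (simp only: e order_refl)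
  qed
  have termS: "avg_vars (dyadic j k) ({1..m} - S) (haar_vars j k S \<Psi>) x0 = (\<integral>z. G (WS S) z \<partial>PP {1..m})"
    if S: "S \<subseteq> {1..m}" for S
  proof -
    have fS: "finite S" using S finite_subset by blast
    let ?C = "{1..m} - S"
    have iW: "\<And>i. integrable lborel (WS S i)" by (simp add: WS_def intA intH)
    have r: "rep m \<Psi> B (WS S)" by (rule loc[OF iW])
    have "avg_vars (dyadic j k) ?C (haar_vars j k S \<Psi>) x0
        = foldr (\<lambda>i. opw (WS S i) i) (sorted_list_of_set ?C) (haar_vars j k S \<Psi>) x0"
      unfolding avg_vars_def
      apply (rule fun_cong[of _ _ x0])
      apply (rule foldr_cong[OF refl refl])
      apply (simp add: avg_opw WS_def wA_def[abs_def])
      done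
    also have "\<dots> = foldr (\<lambda>i. opw (WS S i) i) (sorted_list_of_set ?C)
                      (foldr (\<lambda>i. opw (WS S i) i) (sorted_list_of_set S) \<Psi>) x0"
    proof (rule foldr_opw_cong[where m=m])
      fix y assume y: "y \<in> space (PP {1..m})"
      show "haar_vars j k S \<Psi> y = foldr (\<lambda>i. opw (WS S i) i) (sorted_list_of_set S) \<Psi> y"
        unfolding haar_vars_def
        by (rule rep.haar_conv[OF r]) (use fS S y in \<open>auto simp: WS_def\<close>)
    qed (use x0 in auto)
    also have "\<dots> = foldr (\<lambda>i. opw (WS S i) i) (sorted_list_of_set ?C @ sorted_list_of_set S) \<Psi> x0"
      by simp
    also have "\<dots> = (\<integral>z. G (WS S) z \<partial>PP {1..m})"
      by (rule Grep[OF iW]) (use fS S in auto)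
    finally show ?thesis .
  qed
  let ?SS = "{S. S \<subseteq> {1..m} \<and> even (card S)}"
  have finSS: "finite ?SS" by (rule finite_subset[of _ "Pow {1..m}"]) auto
  have pw: "(\<Sum>S\<in>?SS. G (WS S) z) = 1/2 * G (\<lambda>_. wL) z + 1/2 * G (\<lambda>_. wR) z" for z
  proof -
    have "(\<Sum>S\<in>?SS. G (WS S) z) = (\<Sum>S\<in>?SS. \<Prod>i\<in>{1..m}. if i \<in> S then wH j k (z i) else wA (z i)) * \<Psi> (mrg {1..m} z x0)"
    proof -
      have ws: "\<And>S i. WS S i (z i) = (if i \<in> S then wH j k (z i) else wA (z i))" by (simp add: WS_def)
      show ?thesis by (simp only: G_def ws sum_distrib_right)
    qed
    also have "\<dots> = ((\<Prod>i\<in>{1..m}. wL (z i)) + (\<Prod>i\<in>{1..m}. wR (z i))) / 2 * \<Psi> (mrg {1..m} z x0)"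
      by (subst even_sum) (simp_all add: AHL AHR)
    finally show ?thesis by (simp add: G_def field_simps)
  qed
  have LHS: "(\<Sum>S\<in>?SS. avg_vars (dyadic j k) ({1..m} - S) (haar_vars j k S \<Psi>) x0)
      = 1/2 * (\<integral>z. G (\<lambda>_. wL) z \<partial>PP {1..m}) + 1/2 * (\<integral>z. G (\<lambda>_. wR) z \<partial>PP {1..m})"
  proof -
    have "(\<Sum>S\<in>?SS. avg_vars (dyadic j k) ({1..m} - S) (haar_vars j k S \<Psi>) x0)
        = (\<Sum>S\<in>?SS. (\<integral>z. G (WS S) z \<partial>PP {1..m}))"
      by (intro sum.cong refl termS) auto
    also have "\<dots> = (\<integral>z. (\<Sum>S\<in>?SS. G (WS S) z) \<partial>PP {1..m})"
      by (rule Bochner_Integration.integral_sum[symmetric]) (rule Gint, simp add: WS_def intA intH)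
    also have "\<dots> = (\<integral>z. 1/2 * G (\<lambda>_. wL) z + 1/2 * G (\<lambda>_. wR) z \<partial>PP {1..m})"
      by (rule Bochner_Integration.integral_cong[OF refl pw])
    also have "\<dots> = 1/2 * (\<integral>z. G (\<lambda>_. wL) z \<partial>PP {1..m}) + 1/2 * (\<integral>z. G (\<lambda>_. wR) z \<partial>PP {1..m})"
      using Gint[of "\<lambda>_. wL"] Gint[of "\<lambda>_. wR"] intL intR by simp
    finally show ?thesis .
  qed
  have RL: "avg_vars (left_half j k) {1..m} \<Psi> x0 = (\<integral>z. G (\<lambda>_. wL) z \<partial>PP {1..m})"
  proof -
    have "avg_vars (left_half j k) {1..m} \<Psi> x0 = foldr (\<lambda>i. opw wL i) (sorted_list_of_set {1..m}) \<Psi> x0"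
      unfolding avg_vars_def avg_opw[abs_def] wL_def[abs_def] ..
    also have "\<dots> = (\<integral>z. G (\<lambda>_. wL) z \<partial>PP {1..m})"
      using Grep[of "\<lambda>_. wL"] intL by simp
    finally show ?thesis .
  qed
  have RR: "avg_vars (right_half j k) {1..m} \<Psi> x0 = (\<integral>z. G (\<lambda>_. wR) z \<partial>PP {1..m})"
  proof -
    have "avg_vars (right_half j k) {1..m} \<Psi> x0 = foldr (\<lambda>i. opw wR i) (sorted_list_of_set {1..m}) \<Psi> x0"
      unfolding avg_vars_def avg_opw[abs_def] wR_def[abs_def] ..
    also have "\<dots> = (\<integral>z. G (\<lambda>_. wR) z \<partial>PP {1..m})"
      using Grep[of "\<lambda>_. wR"] intR by simp
    finally show ?thesis .
  qed
  have nonneg: "0 \<le> (\<integral>z. G (\<lambda>_. w) z \<partial>PP {1..m})"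
    if w: "\<And>t. 0 \<le> w t" and P: "\<forall>x \<in> space (PP {1..m}). \<Psi> x \<ge> 0" for w
  proof (rule Bochner_Integration.integral_nonneg)
    fix z assume "z \<in> space (PP {1..m})"
    have "0 \<le> \<Psi> (mrg {1..m} z x0)" using P mrg_in[of "{1..m}" m x0 z] x0 by auto
    then show "0 \<le> G (\<lambda>_. w) z" unfolding G_def by (intro mult_nonneg_nonneg prod_nonneg) (auto intro: w)
  qed
  have wLn: "0 \<le> wL t" for t unfolding wL_def by simp
  have wRn: "0 \<le> wR t" for t unfolding wR_def by simp
  show ?thesis
    unfolding x0_def[symmetric] LHS RL RR
    using nonneg[OF wLn] nonneg[OF wRn] by auto
qed


end
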